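(* Let $\tilde w,\tilde w'\in\tilde W^+_1$, let $\lambda\in X^*(T)$ be dominant and $\nu\in X^*(T)$. If $t_\nu w_0 t_\lambda \tilde w\le w_0t_\lambda\tilde w'$ and $t_{-\nu}w_0t_\lambda\tilde w'\le w_0t_\lambda\tilde w$, then $\nu\in X^0(T)$ and $\tilde w'=t_\nu\tilde w$.
   Context: Let $G$ be a split connected reductive group with maximal split torus $T$ and Borel $B\supset T$; $X^*(T)$, roots $\Phi$, positive roots $\Phi^+$, simple roots $\Delta$, coroots $\alpha^\vee$, Weyl group $W$ with longest element $w_0$, root lattice $\Lambda_R$. $X^0(T)=\{\lambda\in X^*(T):\langle\lambda,\alpha^\vee\rangle=0\ \forall\alpha\in\Delta\}$; $\lambda$ is dominant if $\langle\lambda,\alpha^\vee\rangle\ge0$ for all $\alpha\in\Delta$. $\tilde W = X^*(T)\rtimes W$ (translations $t_\nu$), $W_a = \Lambda_R\rtimes W$, acting on $V=X^*(T)\otimes\mathbb{R}$ by $t_\nu w(x)=w(x)+\nu$. Alcoves are connected components of $V\setminus\bigcup_{\alpha\in\Phi^+,k\in\mathbb{Z}}\{x:\langle x,\alpha^\vee\rangle=k\}$; $A_0=\{x:0<\langle x,\alpha^\vee\rangle<1\ \forall\alpha\in\Phi^+\}$; $\Omega$ is the stabilizer of $A_0$ in $\tilde W$, $\tilde W=W_a\rtimes\Omega$. Bruhat order $\le$ on $\tilde W$: that of the Coxeter group $W_a$ (simple reflections = reflections in walls of $A_0$), extended by $\tilde w_1\delta\le\tilde w_2\delta\iff\tilde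 w_1\le\tilde w_2$ ($\delta\in\Omega$), different $W_a$-cosets incomparable. $\tilde W^+_1$ is the set of $\tilde w\in\tilde W$ such that $0<\langle x,\alpha^\vee\rangle<1$ for all $x\in\tilde w(A_0)$ and all $\alpha\in\Delta$. *)

theory Defs
  imports "HOL-Analysis.Analysis"
begin

text \<open>
The character lattice X*(T) is modelled as the integer points of
V = real^'n (i.e. X*(T) = Z^n with a chosen basis, V = X*(T) (x) R); the
cocharacter lattice is identified with the integer points as well, the perfect
pairing being the standard inner product.  Roots are elements of Phi, the coroot
map is cor.  Elements of the extended affine Weyl group are represented by
the affine maps of V through which they act (the action is faithful).
\<close>

definition charlat :: "(real^'n) set" where
  "charlat = {x. \<forall>i. x $ i \<in> \<int>}"

definition refl :: "real^'n \<Rightarrow> real^'n \<Rightarrow> real^'n \<Rightarrow> real^'n" where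
  "refl a av x = x - (x \<bullet> av) *\<^sub>R a"

definition root_datum :: "(real^'n) set \<Rightarrow> (real^'n \<Rightarrow> real^'n) \<Rightarrow> bool" where
  "root_datum Phi cor \<longleftrightarrow>
     finite Phi \<and> Phi \<subseteq> charlat \<and> cor ` Phi \<subseteq> charlat \<and> inj_on cor Phi \<and>
     (\<forall>a\<in>Phi. a \<bullet> cor a = 2) \<and>
     (\<forall>a\<in>Phi. \<forall>b\<in>Phi. refl a (cor a) b \<in> Phi \<and> refl (cor a) a (cor b) \<in> cor ` Phi) \<and>
     (\<forall>a\<in>Phi. \<forall>c::real. c *\<^sub>R a \<in> Phi \<longrightarrow> c = 1 \<or> c = -1)"

text \<open>Positive system determined by the Borel B: the roots positive for a
generic linear functional.\<close>
definition positive_system :: "(real^'n) set \<Rightarrow> (real^'n) set \<Rightarrow> bool" where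
  "positive_system Phi Pos \<longleftrightarrow>
     (\<exists>f::real^'n. (\<forall>a\<in>Phi. f \<bullet> a \<noteq> 0) \<and> Pos = {a\<in>Phi. f \<bullet> a > 0})"

definition simple_roots :: "(real^'n) set \<Rightarrow> (real^'n) set" where
  "simple_roots Pos = {a\<in>Pos. \<not> (\<exists>b\<in>Pos. \<exists>c\<in>Pos. a = b + c)}"

definition dominant :: "(real^'n) set \<Rightarrow> (real^'n \<Rightarrow> real^'n) \<Rightarrow> real^'n \<Rightarrow> bool" where
  "dominant Pos cor l \<longleftrightarrow> (\<forall>a\<in>simple_roots Pos. l \<bullet> cor a \<ge> 0)"

definition X0 :: "(real^'n) set \<Rightarrow> (real^'n \<Rightarrow> real^'n) \<Rightarrow> (real^'n) set" where
  "X0 Pos cor = {l \<in> charlat. \<forall>a\<in>simple_roots Pos. l \<bullet> cor a = 0}"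

inductive_set weyl :: "(real^'n) set \<Rightarrow> (real^'n \<Rightarrow> real^'n) \<Rightarrow> (real^'n \<Rightarrow> real^'n) set"
  for Phi cor where
  weyl_id: "id \<in> weyl Phi cor"
| weyl_step: "a \<in> Phi \<Longrightarrow> w \<in> weyl Phi cor \<Longrightarrow> refl a (cor a) \<circ> w \<in> weyl Phi cor"

definition transl :: "real^'n \<Rightarrow> real^'n \<Rightarrow> real^'n" where
  "transl v = (\<lambda>x. x + v)"

definition ext_weyl :: "(real^'n) set \<Rightarrow> (real^'n \<Rightarrow> real^'n) \<Rightarrow> (real^'n \<Rightarrow> real^'n) set" where
  "ext_weyl Phi cor = {transl v \<circ> w | v w. v \<in> charlat \<and> w \<in> weyl Phi cor}"

definition base_alcove :: "(real^'n) set \<Rightarrow> (real^'n \<Rightarrow> real^'n) \<Rightarrow> (real^'n) set" where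
  "base_alcove Pos cor = {x. \<forall>a\<in>Pos. 0 < x \<bullet> cor a \<and> x \<bullet> cor a < 1}"

definition separates :: "real^'n \<Rightarrow> int \<Rightarrow> (real^'n) set \<Rightarrow> (real^'n) set \<Rightarrow> bool" where
  "separates av k A B \<longleftrightarrow>
     (\<exists>x\<in>A. \<exists>y\<in>B. (x \<bullet> av - of_int k) * (y \<bullet> av - of_int k) < 0)"

text \<open>Length: number of affine root hyperplanes separating A_0 and w(A_0)
(this is the Coxeter length on W_a, extended to the extended group by
l(w delta) = l(w)).\<close>
definition alen :: "(real^'n) set \<Rightarrow> (real^'n \<Rightarrow> real^'n) \<Rightarrow> (real^'n \<Rightarrow> real^'n) \<Rightarrow> nat" where
  "alen Pos cor w = card {(a, k). a \<in> Pos \<and>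
       separates (cor a) k (base_alcove Pos cor) (w ` base_alcove Pos cor)}"

definition aff_refl :: "real^'n \<Rightarrow> real^'n \<Rightarrow> int \<Rightarrow> real^'n \<Rightarrow> real^'n" where
  "aff_refl a av k x = x - (x \<bullet> av - of_int k) *\<^sub>R a"

text \<open>On W_a delta this is
the Bruhat order of W_a transported by delta; distinct W_a-cosets are incomparable.\<close>
definition bruhat_step :: "(real^'n) set \<Rightarrow> (real^'n \<Rightarrow> real^'n)
     \<Rightarrow> (real^'n \<Rightarrow> real^'n) \<Rightarrow> (real^'n \<Rightarrow> real^'n) \<Rightarrow> bool" where
  "bruhat_step Pos cor u v \<longleftrightarrow>
     (\<exists>a\<in>Pos. \<exists>k::int. v = aff_refl a (cor a) k \<circ> u \<and> alen Pos cor u < alen Pos cor v)"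

definition bruhat_le :: "(real^'n) set \<Rightarrow> (real^'n \<Rightarrow> real^'n)
     \<Rightarrow> (real^'n \<Rightarrow> real^'n) \<Rightarrow> (real^'n \<Rightarrow> real^'n) \<Rightarrow> bool" where
  "bruhat_le Pos cor = (bruhat_step Pos cor)\<^sup>*\<^sup>*"

definition w0 :: "(real^'n) set \<Rightarrow> (real^'n \<Rightarrow> real^'n) \<Rightarrow> (real^'n) set \<Rightarrow> real^'n \<Rightarrow> real^'n" where
  "w0 Phi cor Pos = (ARG_MAX (alen Pos cor) w. w \<in> weyl Phi cor)"

definition W1plus :: "(real^'n) set \<Rightarrow> (real^'n \<Rightarrow> real^'n) \<Rightarrow> (real^'n) set
     \<Rightarrow> (real^'n \<Rightarrow> real^'n) set" where
  "W1plus Phi cor Pos = {w \<in> ext_weyl Phi cor.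
      \<forall>x\<in>w ` base_alcove Pos cor. \<forall>a\<in>simple_roots Pos. 0 < x \<bullet> cor a \<and> x \<bullet> cor a < 1}"

end

theory Submission
  imports Defs
begin

locale rdat =
  fixes Phi Pos :: "(real^'n) set" and cor :: "real^'n \<Rightarrow> real^'n" and f :: "real^'n"
  assumes rd: "root_datum Phi cor"
    and fnz: "\<forall>a\<in>Phi. f \<bullet> a \<noteq> 0"
    and Pos_def: "Pos = {a\<in>Phi. f \<bullet> a > 0}"
begin

abbreviation "s a \<equiv> refl a (cor a)"
abbreviation "st a \<equiv> refl (cor a) a"

lemma finPhi: "finite Phi" using rd unfolding root_datum_def by auto
lemma Phi_lat: "a \<in> Phi \<Longrightarrow> a \<in> charlat" using rd unfolding root_datum_def by auto
lemma cor_lat: "a \<in> Phi \<Longrightarrow> cor a \<in> charlat" using rd unfolding root_datum_def by auto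
lemma cor_inj: "inj_on cor Phi" using rd unfolding root_datum_def by auto
lemma two: "a \<in> Phi \<Longrightarrow> a \<bullet> cor a = 2" using rd unfolding root_datum_def by auto
lemma s_Phi: "a \<in> Phi \<Longrightarrow> b \<in> Phi \<Longrightarrow> s a b \<in> Phi" using rd unfolding root_datum_def by auto
lemma st_cor: "a \<in> Phi \<Longrightarrow> b \<in> Phi \<Longrightarrow> st a (cor b) \<in> cor ` Phi" using rd unfolding root_datum_def by auto
lemma reduced: "a \<in> Phi \<Longrightarrow> c *\<^sub>R a \<in> Phi \<Longrightarrow> c = 1 \<or> c = -1" using rd unfolding root_datum_def by auto

lemma finPos: "finite Pos" using finPhi Pos_def by auto
lemma Pos_Phi: "a \<in> Pos \<Longrightarrow> a \<in> Phi" using Pos_def by auto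

lemma s_apply: "s a x = x - (x \<bullet> cor a) *\<^sub>R a" by (simp add: refl_def)
lemma st_apply: "st a y = y - (y \<bullet> a) *\<^sub>R cor a" by (simp add: refl_def)

lemma s_adj: "s a x \<bullet> y = x \<bullet> st a y"
  by (simp add: refl_def inner_diff_left inner_diff_right algebra_simps inner_commute)

lemma s_self: "a \<in> Phi \<Longrightarrow> s a a = - a"
  using two[of a] by (simp add: refl_def scaleR_2)

lemma st_self: "a \<in> Phi \<Longrightarrow> st a (cor a) = - cor a"
  using two[of a] by (simp add: refl_def scaleR_2 inner_commute)

lemma s_invol: "a \<in> Phi \<Longrightarrow> s a (s a x) = x"
  using two[of a] by (simp add: refl_def inner_diff_left algebra_simps)

lemma st_invol: "a \<in> Phi \<Longrightarrow> st a (st a x) = x"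
  using two[of a] by (simp add: refl_def inner_diff_left algebra_simps inner_commute)

lemma neg_Phi: "a \<in> Phi \<Longrightarrow> - a \<in> Phi" using s_self s_Phi by metis

lemma Pos_or_neg: "a \<in> Phi \<Longrightarrow> a \<in> Pos \<or> - a \<in> Pos"
  using fnz neg_Phi Pos_def by force

lemma Pos_not_neg: "a \<in> Pos \<Longrightarrow> - a \<notin> Pos"
  using Pos_def by auto

lemma Pos_nz: "a \<in> Phi \<Longrightarrow> a \<noteq> 0" using two by force

lemma lat_inner: "x \<in> charlat \<Longrightarrow> y \<in> charlat \<Longrightarrow> x \<bullet> y \<in> \<int>"
  unfolding charlat_def inner_vec_def by (auto intro!: Ints_sum Ints_mult)

lemma lat_add: "x \<in> charlat \<Longrightarrow> y \<in> charlat \<Longrightarrow> x + y \<in> charlat"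
  unfolding charlat_def by auto
lemma lat_diff: "x \<in> charlat \<Longrightarrow> y \<in> charlat \<Longrightarrow> x - y \<in> charlat"
  unfolding charlat_def by auto
lemma lat_neg: "x \<in> charlat \<Longrightarrow> - x \<in> charlat"
  unfolding charlat_def by auto
lemma lat_zero: "0 \<in> charlat"
  unfolding charlat_def by auto
lemma lat_scale: "x \<in> charlat \<Longrightarrow> c \<in> \<int> \<Longrightarrow> c *\<^sub>R x \<in> charlat"
  unfolding charlat_def by auto

lemma s_lat: "a \<in> Phi \<Longrightarrow> x \<in> charlat \<Longrightarrow> s a x \<in> charlat"
  unfolding s_apply by (intro lat_diff lat_scale lat_inner) (auto simp: Phi_lat cor_lat)

definition Q :: "(real^'n) set \<Rightarrow> real^'n \<Rightarrow> real^'n \<Rightarrow> real" where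
  "Q D x y = (\<Sum>d\<in>D. (x \<bullet> d) * (y \<bullet> d))"

lemma Q_sym: "Q D x y = Q D y x" unfolding Q_def by (simp add: mult.commute)

lemma Q_inv:
  assumes "finite D" "\<And>x y. R x \<bullet> y = x \<bullet> R' y" "R' ` D = D" "inj_on R' D"
  shows "Q D (R x) (R y) = Q D x y"
proof -
  have "Q D (R x) (R y) = (\<Sum>d\<in>D. (x \<bullet> R' d) * (y \<bullet> R' d))"
    unfolding Q_def assms(2) ..
  also have "\<dots> = (\<Sum>e\<in>R' ` D. (x \<bullet> e) * (y \<bullet> e))"
    using sum.reindex[OF assms(4), of "\<lambda>e. (x \<bullet> e) * (y \<bullet> e)"] by simp
  finally show ?thesis using assms(3) by (simp add: Q_def)
qed

lemma Q_ge: "finite D \<Longrightarrow> d \<in> D \<Longrightarrow> (x \<bullet> d)^2 \<le> Q D x x"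
  unfolding Q_def power2_eq_square by (rule member_le_sum) auto

lemma Q_nonneg: "0 \<le> Q D x x"
  unfolding Q_def by (auto intro!: sum_nonneg)

lemma Q_zero: "finite D \<Longrightarrow> Q D x x = 0 \<Longrightarrow> d \<in> D \<Longrightarrow> x \<bullet> d = 0"
  unfolding Q_def using sum_nonneg_eq_0_iff[of D "\<lambda>d. (x \<bullet> d) * (x \<bullet> d)"] by auto

lemma Q_lin2: "finite S \<Longrightarrow> Q D x (\<Sum>i\<in>S. r i *\<^sub>R v i) = (\<Sum>i\<in>S. r i * Q D x (v i))"
  unfolding Q_def by (simp add: inner_sum_left sum_distrib_left sum_distrib_right mult_ac sum.swap[of _ S])

lemma Q_refl_eq:
  assumes "finite D" "Q D (x - c *\<^sub>R a) (- a) = Q D x a"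
  shows "c * Q D a a = 2 * Q D x a"
  using assms(2) unfolding Q_def
  by (simp add: inner_diff_left sum_subtractf algebra_simps sum_distrib_left sum_negf)

definition "CC = Q (cor ` Phi)"
definition "CD = Q Phi"

lemma st_perm: "a \<in> Phi \<Longrightarrow> st a ` (cor ` Phi) = cor ` Phi"
proof
  assume a: "a \<in> Phi"
  show "st a ` cor ` Phi \<subseteq> cor ` Phi" using st_cor[OF a] by auto
  show "cor ` Phi \<subseteq> st a ` cor ` Phi"
  proof
    fix e assume "e \<in> cor ` Phi"
    then obtain b where b: "b \<in> Phi" "e = cor b" by auto
    have "st a e \<in> cor ` Phi" using st_cor[OF a b(1)] b by auto
    moreover have "e = st a (st a e)" using st_invol[OF a] by simp
    ultimately show "e \<in> st a ` cor ` Phi" by blast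
  qed
qed

lemma s_perm: "a \<in> Phi \<Longrightarrow> s a ` Phi = Phi"
proof
  assume a: "a \<in> Phi"
  show "s a ` Phi \<subseteq> Phi" using s_Phi[OF a] by auto
  show "Phi \<subseteq> s a ` Phi"
  proof
    fix e assume "e \<in> Phi"
    moreover have "e = s a (s a e)" using s_invol[OF a] by simp
    ultimately show "e \<in> s a ` Phi" using s_Phi[OF a] by blast
  qed
qed

lemma st_inj: "a \<in> Phi \<Longrightarrow> inj_on (st a) X"
  by (metis inj_onI st_invol)
lemma s_inj: "a \<in> Phi \<Longrightarrow> inj_on (s a) X"
  by (metis inj_onI s_invol)

lemma CC_inv: assumes a: "a \<in> Phi" shows "CC (s a x) (s a y) = CC x y"
  unfolding CC_def
  apply (rule Q_inv[where R'="st a"])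
  using finPhi apply simp
  apply (rule s_adj)
  using st_perm[OF a] apply simp
  using st_inj[OF a] by simp

lemma CD_inv: assumes a: "a \<in> Phi" shows "CD (st a x) (st a y) = CD x y"
  unfolding CD_def
  apply (rule Q_inv[where R'="s a"])
  using finPhi apply simp
  using s_adj apply (simp add: inner_commute)
  using s_perm[OF a] apply simp
  using s_inj[OF a] by simp

lemma cor_rep: "a \<in> Phi \<Longrightarrow> (x \<bullet> cor a) * CC a a = 2 * CC x a"
proof -
  assume a: "a \<in> Phi"
  have "CC (s a x) (s a a) = CC x a" by (rule CC_inv[OF a])
  hence "CC (s a x) (- a) = CC x a" unfolding s_self[OF a] .
  hence "Q (cor ` Phi) (x - (x \<bullet> cor a) *\<^sub>R a) (- a) = Q (cor ` Phi) x a"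
    by (simp add: CC_def s_apply)
  thus ?thesis using Q_refl_eq[of "cor ` Phi"] finPhi by (simp add: CC_def)
qed

lemma corT_rep: "a \<in> Phi \<Longrightarrow> (y \<bullet> a) * CD (cor a) (cor a) = 2 * CD y (cor a)"
proof -
  assume a: "a \<in> Phi"
  have "CD (st a y) (st a (cor a)) = CD y (cor a)" by (rule CD_inv[OF a])
  hence "CD (st a y) (- cor a) = CD y (cor a)" unfolding st_self[OF a] .
  hence "Q Phi (y - (y \<bullet> a) *\<^sub>R cor a) (- cor a) = Q Phi y (cor a)"
    by (simp add: CD_def st_apply)
  thus ?thesis using Q_refl_eq[of "Phi"] finPhi by (simp add: CD_def)
qed

lemma CC_pos: "a \<in> Phi \<Longrightarrow> CC a a \<ge> 4"
  using Q_ge[of "cor ` Phi" "cor a" a] finPhi two[of a] by (simp add: CC_def)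

lemma CD_pos: "a \<in> Phi \<Longrightarrow> CD (cor a) (cor a) \<ge> 4"
  using Q_ge[of "Phi" a "cor a"] finPhi two[of a] by (simp add: CD_def inner_commute)

lemma cor_s: assumes a: "a \<in> Phi" and b: "b \<in> Phi" shows "cor (s a b) = st a (cor b)"
proof -
  have sb: "s a b \<in> Phi" using s_Phi a b by auto
  have "x \<bullet> cor (s a b) = x \<bullet> st a (cor b)" for x
  proof -
    have e1: "CC (s a b) (s a b) = CC b b" using CC_inv[OF a] .
    have e2: "CC x (s a b) = CC (s a x) b"
      using CC_inv[OF a, of "s a x" b] s_invol[OF a] by simp
    have "x \<bullet> cor (s a b) * CC b b = 2 * CC (s a x) b"
      using cor_rep[OF sb, of x] e1 e2 by simp
    also have "\<dots> = (s a x \<bullet> cor b) * CC b b" using cor_rep[OF b, of "s a x"] by simp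
    finally show ?thesis using CC_pos[OF b] s_adj by simp
  qed
  thus ?thesis using vector_eq_ldot by blast
qed

lemma cor_neg: "a \<in> Phi \<Longrightarrow> cor (- a) = - cor a"
  using cor_s[of a a] s_self st_self by simp

lemma sign_sym: "a \<in> Phi \<Longrightarrow> b \<in> Phi \<Longrightarrow> (a \<bullet> cor b > 0) = (b \<bullet> cor a > 0)"
proof -
  assume a: "a \<in> Phi" and b: "b \<in> Phi"
  have 1: "(a \<bullet> cor b) * CC b b = 2 * CC a b" using cor_rep[OF b] .
  have 2: "(b \<bullet> cor a) * CC a a = 2 * CC a b" using cor_rep[OF a, of b] Q_sym by (simp add: CC_def)
  have p1: "CC a a > 0" "CC b b > 0" using CC_pos a b by force+
  have q1: "a \<bullet> cor b = 2 * CC a b / CC b b" using 1 p1 by (simp add: field_simps)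
  have q2: "b \<bullet> cor a = 2 * CC a b / CC a a" using 2 p1 by (simp add: field_simps)
  show ?thesis unfolding q1 q2 using p1 by (simp add: zero_less_divide_iff)
qed


abbreviation "Sr \<equiv> simple_roots Pos"
abbreviation "A0 \<equiv> base_alcove Pos cor"

lemma Sr_Pos: "Sr \<subseteq> Pos" unfolding simple_roots_def by auto
lemma finSr: "finite Sr" using finite_subset[OF Sr_Pos finPos] .
lemma Sr_Phi: "\<alpha> \<in> Sr \<Longrightarrow> \<alpha> \<in> Phi" using Sr_Pos Pos_Phi by auto
lemma Pos_f: "a \<in> Pos \<Longrightarrow> f \<bullet> a > 0" using Pos_def by auto

lemma expand: assumes "a \<in> Pos" shows "\<exists>n::real^'n \<Rightarrow> nat. a = (\<Sum>\<alpha>\<in>Sr. real (n \<alpha>) *\<^sub>R \<alpha>)"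
  using assms
proof (induction "card {b\<in>Pos. f \<bullet> b < f \<bullet> a}" arbitrary: a rule: less_induct)
  case less
  show ?case
  proof (cases "a \<in> Sr")
    case True
    have "(\<Sum>\<alpha>\<in>Sr. real (if \<alpha> = a then 1 else 0) *\<^sub>R \<alpha>) = (\<Sum>\<alpha>\<in>Sr. if \<alpha> = a then \<alpha> else 0)"
      by (rule sum.cong) auto
    also have "\<dots> = a" using True finSr by (simp add: sum.delta')
    finally show ?thesis by (intro exI[of _ "\<lambda>\<alpha>. if \<alpha> = a then 1 else 0"]) simp
  next
    case False
    then obtain b c where bc: "b \<in> Pos" "c \<in> Pos" "a = b + c"
      using less.prems unfolding simple_roots_def by auto
    have fb: "f \<bullet> b < f \<bullet> a" using bc Pos_f[of c] by (simp add: inner_add_right)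
    have fc: "f \<bullet> c < f \<bullet> a" using bc Pos_f[of b] by (simp add: inner_add_right)
    have "card {d\<in>Pos. f \<bullet> d < f \<bullet> b} < card {d\<in>Pos. f \<bullet> d < f \<bullet> a}"
      by (rule psubset_card_mono) (use finPos fb bc in auto)
    then obtain nb where nb: "b = (\<Sum>\<alpha>\<in>Sr. real (nb \<alpha>) *\<^sub>R \<alpha>)" using less.hyps bc by blast
    have "card {d\<in>Pos. f \<bullet> d < f \<bullet> c} < card {d\<in>Pos. f \<bullet> d < f \<bullet> a}"
      by (rule psubset_card_mono) (use finPos fc bc in auto)
    then obtain nc where nc: "c = (\<Sum>\<alpha>\<in>Sr. real (nc \<alpha>) *\<^sub>R \<alpha>)" using less.hyps bc by blast
    have "a = (\<Sum>\<alpha>\<in>Sr. real (nb \<alpha> + nc \<alpha>) *\<^sub>R \<alpha>)"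
      unfolding bc(3) nb nc by (simp add: scaleR_add_left sum.distrib)
    then show ?thesis by (intro exI[of _ "\<lambda>\<alpha>. nb \<alpha> + nc \<alpha>"])
  qed
qed

lemma corexp: assumes a: "a \<in> Pos"
  shows "\<exists>c. (\<forall>\<alpha>\<in>Sr. c \<alpha> \<ge> 0) \<and> (\<exists>\<alpha>\<in>Sr. c \<alpha> > 0) \<and> (\<forall>x. x \<bullet> cor a = (\<Sum>\<alpha>\<in>Sr. c \<alpha> * (x \<bullet> cor \<alpha>)))"
proof -
  obtain n where n: "a = (\<Sum>\<alpha>\<in>Sr. real (n \<alpha>) *\<^sub>R \<alpha>)" using expand[OF a] by blast
  have aP: "a \<in> Phi" using a Pos_Phi by auto
  have Ca: "CC a a > 0" using CC_pos[OF aP] by simp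
  define c where "c \<alpha> = real (n \<alpha>) * CC \<alpha> \<alpha> / CC a a" for \<alpha>
  have c1: "\<forall>\<alpha>\<in>Sr. c \<alpha> \<ge> 0" using Ca CC_pos Sr_Phi unfolding c_def
    by (metis divide_nonneg_pos mult_nonneg_nonneg of_nat_0_le_iff dual_order.trans zero_le_numeral)
  have c2: "\<exists>\<alpha>\<in>Sr. c \<alpha> > 0"
  proof (rule ccontr)
    assume "\<not> ?thesis"
    then have "\<forall>\<alpha>\<in>Sr. n \<alpha> = 0" using Ca CC_pos Sr_Phi unfolding c_def
      by (metis divide_pos_pos mult_pos_pos of_nat_0_less_iff neq0_conv order_less_le_trans zero_less_numeral)
    then have "a = 0" unfolding n by simp
    then show False using Pos_nz aP by simp
  qed
  have c3: "x \<bullet> cor a = (\<Sum>\<alpha>\<in>Sr. c \<alpha> * (x \<bullet> cor \<alpha>))" for x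
  proof -
    have "x \<bullet> cor a * CC a a = 2 * CC x a" using cor_rep[OF aP] .
    also have "CC x a = (\<Sum>\<alpha>\<in>Sr. real (n \<alpha>) * CC x \<alpha>)"
      unfolding CC_def by (subst n) (rule Q_lin2[OF finSr])
    also have "\<dots> = (\<Sum>\<alpha>\<in>Sr. real (n \<alpha>) * ((x \<bullet> cor \<alpha>) * CC \<alpha> \<alpha> / 2))"
      by (rule sum.cong) (use cor_rep Sr_Phi in \<open>auto simp: field_simps\<close>)
    finally have "x \<bullet> cor a * CC a a = (\<Sum>\<alpha>\<in>Sr. real (n \<alpha>) * ((x \<bullet> cor \<alpha>) * CC \<alpha> \<alpha>))"
      by (simp add: sum_distrib_left)
    then have "x \<bullet> cor a = (\<Sum>\<alpha>\<in>Sr. real (n \<alpha>) * ((x \<bullet> cor \<alpha>) * CC \<alpha> \<alpha>)) / CC a a"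
      using Ca by (simp add: field_simps)
    also have "\<dots> = (\<Sum>\<alpha>\<in>Sr. c \<alpha> * (x \<bullet> cor \<alpha>))"
      unfolding c_def sum_divide_distrib by (rule sum.cong) auto
    finally show ?thesis .
  qed
  show ?thesis using c1 c2 c3 by blast
qed

lemma pos_from_simple: assumes "a \<in> Pos" "\<forall>\<alpha>\<in>Sr. x \<bullet> cor \<alpha> > 0" shows "x \<bullet> cor a > 0"
proof -
  obtain c where c: "\<forall>\<alpha>\<in>Sr. c \<alpha> \<ge> 0" "\<exists>\<alpha>\<in>Sr. c \<alpha> > 0" "x \<bullet> cor a = (\<Sum>\<alpha>\<in>Sr. c \<alpha> * (x \<bullet> cor \<alpha>))"
    using corexp[OF assms(1)] by blast
  obtain \<beta> where b: "\<beta> \<in> Sr" "c \<beta> > 0" using c(2) by blast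
  have "0 < c \<beta> * (x \<bullet> cor \<beta>)" using b assms(2) by simp
  also have "\<dots> \<le> (\<Sum>\<alpha>\<in>Sr. c \<alpha> * (x \<bullet> cor \<alpha>))"
    by (rule member_le_sum) (use b finSr c(1) assms(2) less_imp_le in auto)
  finally show ?thesis using c(3) by simp
qed

lemma nonpos_from_simple: assumes "a \<in> Pos" "\<forall>\<alpha>\<in>Sr. x \<bullet> cor \<alpha> \<le> 0" shows "x \<bullet> cor a \<le> 0"
proof -
  obtain c where c: "\<forall>\<alpha>\<in>Sr. c \<alpha> \<ge> 0" "x \<bullet> cor a = (\<Sum>\<alpha>\<in>Sr. c \<alpha> * (x \<bullet> cor \<alpha>))"
    using corexp[OF assms(1)] by blast
  show ?thesis unfolding c(2) by (rule sum_nonpos) (use c(1) assms(2) mult_nonneg_nonpos in auto)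
qed

lemma zero_from_simple: assumes "a \<in> Pos" "\<forall>\<alpha>\<in>Sr. x \<bullet> cor \<alpha> = 0" shows "x \<bullet> cor a = 0"
proof -
  obtain c where c: "x \<bullet> cor a = (\<Sum>\<alpha>\<in>Sr. c \<alpha> * (x \<bullet> cor \<alpha>))"
    using corexp[OF assms(1)] by blast
  show ?thesis unfolding c using assms(2) by simp
qed

lemma A0_ne: "A0 \<noteq> {}"
proof -
  define g where "g = (\<Sum>c\<in>Phi. (f \<bullet> c) *\<^sub>R c)"
  have gpos: "g \<bullet> cor a > 0" if a: "a \<in> Pos" for a
  proof -
    have aP: "a \<in> Phi" using a Pos_Phi by auto
    have "g \<bullet> cor a = CD f (cor a)"
      unfolding g_def CD_def Q_def inner_sum_left
      by (rule sum.cong) (auto simp: inner_commute)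
    moreover have "(f \<bullet> a) * CD (cor a) (cor a) = 2 * CD f (cor a)" using corT_rep[OF aP] .
    moreover have "CD (cor a) (cor a) > 0" using CD_pos[OF aP] by simp
    moreover have "f \<bullet> a > 0" using Pos_f a by auto
    ultimately have "g \<bullet> cor a = (f \<bullet> a) * CD (cor a) (cor a) / 2" by simp
    moreover have "(f \<bullet> a) * CD (cor a) (cor a) > 0"
      using \<open>CD (cor a) (cor a) > 0\<close> \<open>f \<bullet> a > 0\<close> by simp
    ultimately show ?thesis by linarith
  qed
  define T where "T = (\<Sum>a\<in>Pos. g \<bullet> cor a)"
  have T0: "T \<ge> 0" unfolding T_def by (rule sum_nonneg) (use gpos less_imp_le in blast)
  have "(1 / (1 + T)) *\<^sub>R g \<in> A0"
    unfolding base_alcove_def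
  proof (intro CollectI ballI conjI)
    fix a assume a: "a \<in> Pos"
    have le: "g \<bullet> cor a \<le> T" unfolding T_def
      by (rule member_le_sum) (use a finPos gpos less_imp_le in auto)
    show "0 < (1 / (1 + T)) *\<^sub>R g \<bullet> cor a" using gpos[OF a] T0 by simp
    show "(1 / (1 + T)) *\<^sub>R g \<bullet> cor a < 1" using le T0 by (simp add: field_simps)
  qed
  then show ?thesis by blast
qed






lemma diff_not_root: assumes "\<alpha> \<in> Sr" "\<beta> \<in> Sr" shows "\<alpha> - \<beta> \<notin> Phi"
proof
  assume d: "\<alpha> - \<beta> \<in> Phi"
  have bP: "\<beta> \<in> Pos" "\<alpha> \<in> Pos" using assms Sr_Pos by auto
  show False
  proof (cases "\<alpha> - \<beta> \<in> Pos")
    case True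
    have "\<alpha> = \<beta> + (\<alpha> - \<beta>)" by simp
    then show False using assms(1) True bP unfolding simple_roots_def by blast
  next
    case False
    then have "\<beta> - \<alpha> \<in> Pos" using Pos_or_neg[OF d] by simp
    moreover have "\<beta> = \<alpha> + (\<beta> - \<alpha>)" by simp
    ultimately show False using assms(2) bP unfolding simple_roots_def by blast
  qed
qed

lemma int_ge2: assumes "(x::real) \<in> \<int>" "x > 0" "x \<noteq> 1" shows "x \<ge> 2"
proof -
  obtain k where k: "x = of_int k" using assms(1) Ints_cases by blast
  then have "k > 0" "k \<noteq> 1" using assms by auto
  then have "k \<ge> 2" by linarith
  then show ?thesis using k by simp
qed

lemma Q_expand: "Q D (x - t *\<^sub>R y) (x - t *\<^sub>R y) = Q D x x - 2*t*Q D x y + t^2 * Q D y y"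
  unfolding Q_def
  by (simp add: inner_diff_left power2_eq_square algebra_simps sum.distrib sum_subtractf sum_distrib_left)

lemma obtuse: assumes a: "\<alpha> \<in> Sr" and b: "\<beta> \<in> Sr" and ne: "\<alpha> \<noteq> \<beta>" shows "\<alpha> \<bullet> cor \<beta> \<le> 0"
proof (rule ccontr)
  assume "\<not> ?thesis"
  then have p0: "\<alpha> \<bullet> cor \<beta> > 0" by simp
  have aP: "\<alpha> \<in> Phi" and bP: "\<beta> \<in> Phi" using a b Sr_Phi by auto
  define p where "p = \<alpha> \<bullet> cor \<beta>"
  define q where "q = \<beta> \<bullet> cor \<alpha>"
  have q0: "q > 0" using sign_sym[OF aP bP] p0 q_def by simp
  have pZ: "p \<in> \<int>" unfolding p_def using lat_inner Phi_lat cor_lat aP bP by auto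
  have qZ: "q \<in> \<int>" unfolding q_def using lat_inner Phi_lat cor_lat aP bP by auto
  have "p \<noteq> 1"
  proof
    assume "p = 1"
    then have "s \<beta> \<alpha> = \<alpha> - \<beta>" unfolding s_apply p_def by simp
    then show False using s_Phi[OF bP aP] diff_not_root[OF a b] by simp
  qed
  then have p2: "p \<ge> 2" using int_ge2 pZ p0 p_def by blast
  have "q \<noteq> 1"
  proof
    assume "q = 1"
    then have "s \<alpha> \<beta> = \<beta> - \<alpha>" unfolding s_apply q_def by simp
    then show False using s_Phi[OF aP bP] diff_not_root[OF b a] by simp
  qed
  then have q2: "q \<ge> 2" using int_ge2 qZ q0 by blast
  define A where "A = CC \<alpha> \<alpha>"
  define B where "B = CC \<beta> \<beta>"
  define X where "X = CC \<alpha> \<beta>"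
  have A0: "A > 0" using CC_pos[OF aP] A_def by simp
  have B0: "B > 0" using CC_pos[OF bP] B_def by simp
  have hp: "p * B = 2 * X" using cor_rep[OF bP, of \<alpha>] p_def B_def X_def by simp
  have hq: "q * A = 2 * X" using cor_rep[OF aP, of \<beta>] q_def A_def X_def Q_sym by (simp add: CC_def)
  have "p * B > 0" using p0 B0 p_def by simp
  then have X0: "X > 0" using hp by linarith
  have pq: "p * q \<ge> 4" using p2 q2 mult_mono[of 2 p 2 q] by simp
  have "(p * q) * (A * B) = 4 * X^2" using hp hq
    by (metis (no_types, opaque_lifting) mult.assoc mult.left_commute power2_eq_square mult_2 numeral_Bit0 numeral_One mult_1)
  moreover have "4 * (A * B) \<le> (p * q) * (A * B)" using pq A0 B0 by (simp add: mult_right_mono)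
  ultimately have XAB: "A * B \<le> X^2" by simp
  define t where "t = X / B"
  define P where "P = \<alpha> - t *\<^sub>R \<beta>"
  have t0: "t > 0" using X0 B0 t_def by simp
  have "CC P P = A - 2*t*X + t^2 * B"
    unfolding P_def CC_def A_def B_def X_def by (rule Q_expand)
  also have "\<dots> = A - X^2 / B" unfolding t_def using B0 by (simp add: field_simps power2_eq_square)
  also have "\<dots> \<le> 0" using XAB B0 by (simp add: field_simps)
  finally have "CC P P = 0" using Q_nonneg[of "cor ` Phi" P] by (simp add: CC_def)
  then have Pz: "\<And>c. c \<in> Phi \<Longrightarrow> P \<bullet> cor c = 0" using Q_zero[of "cor ` Phi" P] finPhi by (auto simp: CC_def)
  have Pa: "P \<bullet> cor \<alpha> = 0" and Pb: "P \<bullet> cor \<beta> = 0" using Pz aP bP by auto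
  have qt: "q * t = 2" using Pa two[OF aP] unfolding P_def q_def by (simp add: inner_diff_left) (metis mult.commute)
  have aeq: "\<alpha> = P + t *\<^sub>R \<beta>" unfolding P_def by simp
  have qa: "q *\<^sub>R \<alpha> = q *\<^sub>R P + 2 *\<^sub>R \<beta>" unfolding aeq using qt by (simp add: scaleR_add_right)
  show False
  proof (cases "P = 0")
    case True
    then have "\<alpha> = t *\<^sub>R \<beta>" using aeq by simp
    then have "t = 1 \<or> t = -1" using reduced[OF bP] aP by simp
    then have "t = 1" using t0 by auto
    then show False using \<open>\<alpha> = t *\<^sub>R \<beta>\<close> ne by simp
  next
    case False
    define sq where "sq k = \<beta> + (real k * q) *\<^sub>R P" for k :: nat
    have sqP: "sq k \<in> Phi" for k
    proof (induction k)
      case 0 then show ?case using bP by (simp add: sq_def)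
    next
      case (Suc k)
      have e1: "sq k \<bullet> cor \<beta> = 2" using two[OF bP] Pb by (simp add: sq_def inner_add_left)
      have e2: "s \<beta> (sq k) = sq k - 2 *\<^sub>R \<beta>" by (simp only: s_apply e1)
      have e3: "(sq k - 2 *\<^sub>R \<beta>) \<bullet> cor \<alpha> = - q"
        using Pa by (simp add: sq_def inner_add_left inner_diff_left q_def)
      have "s \<alpha> (s \<beta> (sq k)) = s \<alpha> (sq k - 2 *\<^sub>R \<beta>)" by (simp only: e2)
      also have "\<dots> = (sq k - 2 *\<^sub>R \<beta>) - (- q) *\<^sub>R \<alpha>" by (simp only: s_apply e3)
      also have "\<dots> = sq k - 2 *\<^sub>R \<beta> + q *\<^sub>R \<alpha>" by simp
      also have "\<dots> = sq (Suc k)" unfolding qa by (simp add: sq_def algebra_simps)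
      finally have eqn: "s \<alpha> (s \<beta> (sq k)) = sq (Suc k)" .
      have "s \<alpha> (s \<beta> (sq k)) \<in> Phi" using s_Phi[OF aP s_Phi[OF bP Suc.IH]] .
      then show ?case unfolding eqn .
    qed
    have "inj sq"
    proof (rule injI)
      fix i j assume "sq i = sq j"
      then have "(real i * q) *\<^sub>R P = (real j * q) *\<^sub>R P" by (simp add: sq_def)
      then have "real i * q = real j * q" using False by simp
      then show "i = j" using q0 by simp
    qed
    then have "infinite (range sq)" by (rule range_inj_infinite)
    moreover have "range sq \<subseteq> Phi" using sqP by auto
    ultimately show False using finPhi finite_subset by blast
  qed
qed

lemma simple_refl: assumes a: "\<alpha> \<in> Sr" and b: "b \<in> Pos" and ne: "b \<noteq> \<alpha>" shows "s \<alpha> b \<in> Pos"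
proof (rule ccontr)
  assume nP: "s \<alpha> b \<notin> Pos"
  have aP: "\<alpha> \<in> Phi" using a Sr_Phi by auto
  have bP: "b \<in> Phi" using b Pos_Phi by auto
  define k where "k = b \<bullet> cor \<alpha>"
  have sb: "s \<alpha> b = b - k *\<^sub>R \<alpha>" by (simp add: s_apply k_def)
  define c where "c = k *\<^sub>R \<alpha> - b"
  have cP: "c \<in> Pos" using Pos_or_neg[OF s_Phi[OF aP bP]] nP sb c_def by auto
  obtain nb where nb: "b = (\<Sum>i\<in>Sr. real (nb i) *\<^sub>R i)" using expand[OF b] by blast
  obtain nc where nc: "c = (\<Sum>i\<in>Sr. real (nc i) *\<^sub>R i)" using expand[OF cP] by blast
  have "k *\<^sub>R \<alpha> = b + c" unfolding c_def by simp
  also have "\<dots> = (\<Sum>i\<in>Sr. real (nb i + nc i) *\<^sub>R i)" unfolding nb nc by (simp add: scaleR_add_left sum.distrib)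
  also have "\<dots> = real (nb \<alpha> + nc \<alpha>) *\<^sub>R \<alpha> + (\<Sum>i\<in>Sr - {\<alpha>}. real (nb i + nc i) *\<^sub>R i)"
    using sum.remove[OF finSr a] by simp
  finally have eq: "(k - real (nb \<alpha> + nc \<alpha>)) *\<^sub>R \<alpha> = (\<Sum>i\<in>Sr - {\<alpha>}. real (nb i + nc i) *\<^sub>R i)"
    by (simp add: algebra_simps)
  define e where "e = k - real (nb \<alpha> + nc \<alpha>)"
  show False
  proof (cases "e > 0")
    case True
    have h1: "(e *\<^sub>R \<alpha>) \<bullet> cor \<alpha> = 2 * e" using two[OF aP] by simp
    have h2: "(e *\<^sub>R \<alpha>) \<bullet> cor \<alpha> = (\<Sum>i\<in>Sr - {\<alpha>}. real (nb i + nc i) * (i \<bullet> cor \<alpha>))"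
      unfolding e_def eq by (simp add: inner_sum_left)
    have h3: "(\<Sum>i\<in>Sr - {\<alpha>}. real (nb i + nc i) * (i \<bullet> cor \<alpha>)) \<le> 0"
    proof (rule sum_nonpos)
      fix i assume i: "i \<in> Sr - {\<alpha>}"
      have "i \<bullet> cor \<alpha> \<le> 0" using obtuse[of i \<alpha>] i a by blast
      then show "real (nb i + nc i) * (i \<bullet> cor \<alpha>) \<le> 0" by (simp add: mult_nonneg_nonpos)
    qed
    show False using h1 h2 h3 True by linarith
  next
    case False
    have fa: "f \<bullet> \<alpha> > 0" using Pos_f Sr_Pos a by auto
    have "f \<bullet> (e *\<^sub>R \<alpha>) = (\<Sum>i\<in>Sr - {\<alpha>}. real (nb i + nc i) * (f \<bullet> i))"
      unfolding e_def eq by (simp add: inner_sum_right)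
    moreover have "f \<bullet> (e *\<^sub>R \<alpha>) \<le> 0" using False fa by (simp add: mult_nonpos_nonneg)
    moreover have nn: "\<And>i. i \<in> Sr - {\<alpha>} \<Longrightarrow> 0 \<le> real (nb i + nc i) * (f \<bullet> i)"
    proof -
      fix i assume i: "i \<in> Sr - {\<alpha>}"
      have "f \<bullet> i > 0" using Pos_f Sr_Pos i by auto
      then show "0 \<le> real (nb i + nc i) * (f \<bullet> i)" by simp
    qed
    moreover have "0 \<le> (\<Sum>i\<in>Sr - {\<alpha>}. real (nb i + nc i) * (f \<bullet> i))"
      by (rule sum_nonneg) (rule nn)
    ultimately have s0: "(\<Sum>i\<in>Sr - {\<alpha>}. real (nb i + nc i) * (f \<bullet> i)) = 0"
      by linarith
    have fin': "finite (Sr - {\<alpha>})" using finSr by simp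
    have zz: "\<forall>i\<in>Sr - {\<alpha>}. real (nb i + nc i) * (f \<bullet> i) = 0"
      using sum_nonneg_eq_0_iff[OF fin' nn] s0 by (rule iffD1)
    have z: "\<And>i. i \<in> Sr - {\<alpha>} \<Longrightarrow> real (nb i) *\<^sub>R i = 0"
    proof -
      fix i assume i: "i \<in> Sr - {\<alpha>}"
      have "f \<bullet> i > 0" using Pos_f Sr_Pos i by auto
      moreover have "real (nb i + nc i) * (f \<bullet> i) = 0" using zz i by blast
      ultimately show "real (nb i) *\<^sub>R i = 0" by simp
    qed
    have "b = real (nb \<alpha>) *\<^sub>R \<alpha> + (\<Sum>i\<in>Sr - {\<alpha>}. real (nb i) *\<^sub>R i)"
      unfolding nb by (rule sum.remove[OF finSr a])
    also have "(\<Sum>i\<in>Sr - {\<alpha>}. real (nb i) *\<^sub>R i) = 0" by (rule sum.neutral) (use z in blast)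
    finally have bb: "b = real (nb \<alpha>) *\<^sub>R \<alpha>" by simp
    have "real (nb \<alpha>) *\<^sub>R \<alpha> \<in> Phi" using bP bb by simp
    then have "real (nb \<alpha>) = 1 \<or> real (nb \<alpha>) = -1" by (rule reduced[OF aP])
    then have "real (nb \<alpha>) = 1" by auto
    then show False using bb ne by simp
  qed
qed





abbreviation "W \<equiv> weyl Phi cor"

lemma W_s: "a \<in> Phi \<Longrightarrow> s a \<in> W"
  using weyl_step[OF _ weyl_id, of a Phi cor] by simp

lemma W_comp: "w1 \<in> W \<Longrightarrow> w2 \<in> W \<Longrightarrow> w1 \<circ> w2 \<in> W"
proof (induction rule: weyl.induct)
  case weyl_id then show ?case by simp
next
  case (weyl_step a w)
  have "s a \<circ> (w \<circ> w2) \<in> W" by (rule weyl.weyl_step[OF weyl_step(1) weyl_step(3)[OF weyl_step(4)]])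
  then show ?case by (simp only: comp_assoc)
qed

lemma W_add: "w \<in> W \<Longrightarrow> w (x + y) = w x + w y"
proof (induction arbitrary: x y rule: weyl.induct)
  case weyl_id then show ?case by simp
next
  case (weyl_step a w) then show ?case by (simp add: s_apply inner_add_left scaleR_add_left algebra_simps)
qed

lemma W_diff: "w \<in> W \<Longrightarrow> w (x - y) = w x - w y"
  using W_add[of w "x - y" y] by (simp add: algebra_simps)

lemma W_zero: "w \<in> W \<Longrightarrow> w 0 = 0"
  using W_diff[of w 0 0] by simp

lemma W_inj: "w \<in> W \<Longrightarrow> inj w"
proof (induction rule: weyl.induct)
  case weyl_id then show ?case by simp
next
  case (weyl_step a w) show ?case by (rule inj_compose[OF s_inj[OF weyl_step(1)] weyl_step(3)])
qed

lemma W_lat: "w \<in> W \<Longrightarrow> x \<in> charlat \<Longrightarrow> w x \<in> charlat"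
proof (induction arbitrary: x rule: weyl.induct)
  case weyl_id then show ?case by simp
next
  case (weyl_step a w) then show ?case using s_lat by simp
qed

lemma W_cor: "w \<in> W \<Longrightarrow> a \<in> Phi \<Longrightarrow> \<exists>b\<in>Phi. \<forall>x. w x \<bullet> cor a = x \<bullet> cor b"
proof (induction arbitrary: a rule: weyl.induct)
  case weyl_id then show ?case by auto
next
  case (weyl_step c w)
  obtain d where d: "d \<in> Phi" "st c (cor a) = cor d" using st_cor[OF weyl_step(1) weyl_step(4)] by auto
  obtain b where b: "b \<in> Phi" "\<forall>x. w x \<bullet> cor d = x \<bullet> cor b" using weyl_step(3)[OF d(1)] by auto
  have "(s c \<circ> w) x \<bullet> cor a = x \<bullet> cor b" for x
    using s_adj[of c "w x" "cor a"] d b by simp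
  then show ?case using b by blast
qed

lemma W_fix: "w \<in> W \<Longrightarrow> \<forall>a\<in>Phi. mu \<bullet> cor a = 0 \<Longrightarrow> w mu = mu"
proof (induction rule: weyl.induct)
  case weyl_id then show ?case by simp
next
  case (weyl_step a w) then show ?case by (simp add: s_apply)
qed

lemma A0_mem: "x \<in> A0 \<Longrightarrow> a \<in> Pos \<Longrightarrow> 0 < x \<bullet> cor a \<and> x \<bullet> cor a < 1"
  unfolding base_alcove_def by auto

lemma neg_vals: assumes "b \<in> Phi" "b \<notin> Pos" "x \<in> A0"
  shows "-1 < x \<bullet> cor b \<and> x \<bullet> cor b < 0"
proof -
  have nb: "- b \<in> Pos" using Pos_or_neg[OF assms(1)] assms(2) by simp
  have "cor b = - cor (- b)" using cor_neg[OF neg_Phi[OF assms(1)]] by simp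
  then show ?thesis using A0_mem[OF assms(3) nb] by simp
qed

lemma strip:
  assumes "wl \<in> W" "c \<in> charlat" "a \<in> Pos"
  shows "\<exists>m::int. \<forall>x\<in>A0. of_int m < (transl c \<circ> wl) x \<bullet> cor a \<and> (transl c \<circ> wl) x \<bullet> cor a < of_int m + 1"
proof -
  have aP: "a \<in> Phi" using assms(3) Pos_Phi by auto
  obtain b where b: "b \<in> Phi" "\<forall>x. wl x \<bullet> cor a = x \<bullet> cor b" using W_cor[OF assms(1) aP] by auto
  have "c \<bullet> cor a \<in> \<int>" using lat_inner assms(2) cor_lat aP by auto
  then obtain k where k: "c \<bullet> cor a = of_int k" using Ints_cases by blast
  have val: "(transl c \<circ> wl) x \<bullet> cor a = x \<bullet> cor b + of_int k" for x
    using b k by (simp add: transl_def inner_add_left)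
  show ?thesis
  proof (cases "b \<in> Pos")
    case True
    then show ?thesis using A0_mem val by (intro exI[of _ k]) auto
  next
    case False
    then show ?thesis using neg_vals[OF b(1) False] val by (intro exI[of _ "k - 1"]) auto
  qed
qed

lemma alen_strip:
  assumes st: "\<forall>a\<in>Pos. \<forall>x\<in>A0. of_int (m a) < u x \<bullet> cor a \<and> u x \<bullet> cor a < of_int (m a) + 1"
  shows "int (alen Pos cor u) = (\<Sum>a\<in>Pos. \<bar>m a\<bar>)"
proof -
  obtain x0 where x0: "x0 \<in> A0" using A0_ne by auto
  define K where "K a = {k. 1 \<le> k \<and> k \<le> m a} \<union> {k. m a < k \<and> k \<le> 0}" for a
  have sepc: "separates (cor a) k A0 (u ` A0) \<longleftrightarrow> k \<in> K a" if a: "a \<in> Pos" for a k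
  proof
    assume "separates (cor a) k A0 (u ` A0)"
    then obtain x x' where xx: "x \<in> A0" "x' \<in> A0"
      and pr: "(x \<bullet> cor a - of_int k) * (u x' \<bullet> cor a - of_int k) < 0"
      unfolding separates_def by auto
    have X: "0 < x \<bullet> cor a" "x \<bullet> cor a < 1" using A0_mem[OF xx(1) a] by auto
    have Y: "of_int (m a) < u x' \<bullet> cor a" "u x' \<bullet> cor a < of_int (m a) + 1" using st a xx(2) by auto
    show "k \<in> K a"
    proof (cases "k \<ge> 1")
      case True
      then have "x \<bullet> cor a - of_int k < 0" using X by linarith
      then have "u x' \<bullet> cor a - of_int k > 0" using pr by (simp add: mult_less_0_iff)
      then have "real_of_int k < real_of_int (m a + 1)" using Y by simp
      then have "k \<le> m a" by linarith
      then show ?thesis using True K_def by auto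
    next
      case False
      then have "x \<bullet> cor a - of_int k > 0" using X by linarith
      then have "u x' \<bullet> cor a - of_int k < 0" using pr by (simp add: mult_less_0_iff)
      then have "real_of_int (m a) < real_of_int k" using Y by simp
      then have "m a < k" by linarith
      then show ?thesis using False K_def by auto
    qed
  next
    assume k: "k \<in> K a"
    have X: "0 < x0 \<bullet> cor a" "x0 \<bullet> cor a < 1" using A0_mem[OF x0 a] by auto
    have Y: "of_int (m a) < u x0 \<bullet> cor a" "u x0 \<bullet> cor a < of_int (m a) + 1" using st a x0 by auto
    have "(x0 \<bullet> cor a - of_int k) * (u x0 \<bullet> cor a - of_int k) < 0"
    proof (cases "1 \<le> k \<and> k \<le> m a")
      case True
      then have "real_of_int 1 \<le> real_of_int k" "real_of_int k \<le> real_of_int (m a)" by (simp_all only: of_int_le_iff)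
      then have "x0 \<bullet> cor a - of_int k < 0" "u x0 \<bullet> cor a - of_int k > 0" using X Y by simp_all
      then show ?thesis by (simp add: mult_less_0_iff)
    next
      case False
      then have "m a < k \<and> k \<le> 0" using k K_def by auto
      then have "real_of_int (m a + 1) \<le> real_of_int k" "real_of_int k \<le> real_of_int 0" by (simp_all only: of_int_le_iff) auto
      then have "x0 \<bullet> cor a - of_int k > 0" "u x0 \<bullet> cor a - of_int k < 0" using X Y by simp_all
      then show ?thesis by (simp add: mult_less_0_iff)
    qed
    then show "separates (cor a) k A0 (u ` A0)" unfolding separates_def using x0 by blast
  qed
  have seteq: "{(a, k). a \<in> Pos \<and> separates (cor a) k A0 (u ` A0)} = Sigma Pos K"
    using sepc by auto
  have Kc: "K a = (if m a \<ge> 0 then {1..m a} else {m a + 1..0})" for a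
    unfolding K_def by auto
  have cardK: "int (card (K a)) = \<bar>m a\<bar>" for a
    unfolding Kc by auto
  have finK: "finite (K a)" for a unfolding Kc by auto
  have "alen Pos cor u = (\<Sum>a\<in>Pos. card (K a))"
    unfolding alen_def seteq using finPos finK by simp
  then have "int (alen Pos cor u) = (\<Sum>a\<in>Pos. int (card (K a)))" by simp
  then show ?thesis using cardK by simp
qed

lemma bruhat_mono: "bruhat_le Pos cor u v \<Longrightarrow> u = v \<or> alen Pos cor u < alen Pos cor v"
  unfolding bruhat_le_def
proof (induction rule: rtranclp_induct)
  case base then show ?case by simp
next
  case (step y z)
  then have "alen Pos cor y < alen Pos cor z" unfolding bruhat_step_def by auto
  then show ?case using step by auto
qed




lemma W_vals: assumes "w \<in> W" "a \<in> Pos"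
  shows "\<exists>b\<in>Phi. (\<forall>x. w x \<bullet> cor a = x \<bullet> cor b) \<and>
     ((b \<in> Pos \<and> (\<forall>x\<in>A0. 0 < w x \<bullet> cor a \<and> w x \<bullet> cor a < 1)) \<or>
      (b \<notin> Pos \<and> (\<forall>x\<in>A0. -1 < w x \<bullet> cor a \<and> w x \<bullet> cor a < 0)))"
proof -
  have aP: "a \<in> Phi" using assms(2) Pos_Phi by auto
  obtain b where b: "b \<in> Phi" "\<forall>x. w x \<bullet> cor a = x \<bullet> cor b" using W_cor[OF assms(1) aP] by auto
  show ?thesis
  proof (cases "b \<in> Pos")
    case True then show ?thesis using b A0_mem by auto
  next
    case False then show ?thesis using b neg_vals[OF b(1) False] by auto
  qed
qed

lemma W_nz: "w \<in> W \<Longrightarrow> a \<in> Pos \<Longrightarrow> x \<in> A0 \<Longrightarrow> w x \<bullet> cor a \<noteq> 0"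
  using W_vals by fastforce

lemma alen_weyl: assumes w: "w \<in> W" and x0: "x0 \<in> A0"
  shows "alen Pos cor w = card {a\<in>Pos. w x0 \<bullet> cor a < 0}"
proof -
  define m where "m a = (if w x0 \<bullet> cor a < 0 then -1 else (0::int))" for a
  have st: "\<forall>a\<in>Pos. \<forall>x\<in>A0. of_int (m a) < w x \<bullet> cor a \<and> w x \<bullet> cor a < of_int (m a) + 1"
  proof (intro ballI)
    fix a x assume a: "a \<in> Pos" and x: "x \<in> A0"
    obtain b where b: "b \<in> Phi" "((b \<in> Pos \<and> (\<forall>x\<in>A0. 0 < w x \<bullet> cor a \<and> w x \<bullet> cor a < 1)) \<or>
      (b \<notin> Pos \<and> (\<forall>x\<in>A0. -1 < w x \<bullet> cor a \<and> w x \<bullet> cor a < 0)))"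
      using W_vals[OF w a] by blast
    then show "of_int (m a) < w x \<bullet> cor a \<and> w x \<bullet> cor a < of_int (m a) + 1"
      using x x0 unfolding m_def by force
  qed
  have "int (alen Pos cor w) = (\<Sum>a\<in>Pos. \<bar>m a\<bar>)" by (rule alen_strip[OF st])
  also have "\<dots> = (\<Sum>a\<in>Pos. if w x0 \<bullet> cor a < 0 then 1 else 0)"
    by (rule sum.cong) (auto simp: m_def)
  also have "\<dots> = (\<Sum>a\<in>{a\<in>Pos. w x0 \<bullet> cor a < 0}. 1)"
    using sum.inter_filter[OF finPos, of "\<lambda>_. (1::int)"] by simp
  also have "\<dots> = int (card {a\<in>Pos. w x0 \<bullet> cor a < 0})" by simp
  finally show ?thesis by simp
qed

definition "W0 = w0 Phi cor Pos"

lemma W0_max: "W0 \<in> W \<and> (\<forall>w\<in>W. alen Pos cor w \<le> alen Pos cor W0)"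
proof -
  obtain x0 where x0: "x0 \<in> A0" using A0_ne by auto
  have bd: "\<forall>w. w \<in> W \<longrightarrow> alen Pos cor w < card Pos + 1"
  proof (intro allI impI)
    fix w assume "w \<in> W"
    then have "alen Pos cor w = card {a\<in>Pos. w x0 \<bullet> cor a < 0}" using alen_weyl x0 by blast
    also have "\<dots> \<le> card Pos" by (rule card_mono[OF finPos]) auto
    finally show "alen Pos cor w < card Pos + 1" by simp
  qed
  have "(\<lambda>w. w \<in> W) (arg_max (alen Pos cor) (\<lambda>w. w \<in> W)) \<and>
        (\<forall>y. y \<in> W \<longrightarrow> alen Pos cor y \<le> alen Pos cor (arg_max (alen Pos cor) (\<lambda>w. w \<in> W)))"
    by (rule arg_max_nat_lemma[OF weyl_id bd])
  then show ?thesis unfolding W0_def w0_def by auto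
qed

lemma W0_anti: assumes x0: "x0 \<in> A0" and a: "a \<in> Pos" shows "W0 x0 \<bullet> cor a < 0"
proof (rule ccontr)
  assume na: "\<not> W0 x0 \<bullet> cor a < 0"
  have W0W: "W0 \<in> W" using W0_max by auto
  have "W0 x0 \<bullet> cor a > 0" using W_nz[OF W0W a x0] na by linarith
  then obtain \<alpha> where al: "\<alpha> \<in> Sr" "W0 x0 \<bullet> cor \<alpha> > 0"
    using nonpos_from_simple[OF a, of "W0 x0"] by force
  have aPh: "\<alpha> \<in> Phi" using al Sr_Phi by auto
  have aPos: "\<alpha> \<in> Pos" using al Sr_Pos by auto
  define w1 where "w1 = s \<alpha> \<circ> W0"
  have w1W: "w1 \<in> W" unfolding w1_def by (rule W_comp[OF W_s[OF aPh] W0W])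
  define N where "N w = {b\<in>Pos. w x0 \<bullet> cor b < 0}" for w
  have val: "w1 x0 \<bullet> cor b = W0 x0 \<bullet> st \<alpha> (cor b)" for b
    unfolding w1_def by (simp add: s_adj)
  have valne: "w1 x0 \<bullet> cor b = W0 x0 \<bullet> cor (s \<alpha> b)" if "b \<in> Phi" for b
    unfolding val using cor_s[OF aPh that] by simp
  have aN1: "\<alpha> \<in> N w1" unfolding N_def using val[of \<alpha>] st_self[OF aPh] al aPos by simp
  have aN0: "\<alpha> \<notin> N W0" unfolding N_def using al by simp
  have eqN: "N w1 = insert \<alpha> (s \<alpha> ` N W0)"
  proof
    show "N w1 \<subseteq> insert \<alpha> (s \<alpha> ` N W0)"
    proof
      fix b assume b: "b \<in> N w1"
      show "b \<in> insert \<alpha> (s \<alpha> ` N W0)"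
      proof (cases "b = \<alpha>")
        case True then show ?thesis by simp
      next
        case False
        have bP: "b \<in> Pos" using b N_def by auto
        have "s \<alpha> b \<in> Pos" using simple_refl[OF al(1) bP False] .
        moreover have "W0 x0 \<bullet> cor (s \<alpha> b) < 0" using b valne[of b] bP Pos_Phi N_def by auto
        ultimately have "s \<alpha> b \<in> N W0" unfolding N_def by simp
        moreover have "b = s \<alpha> (s \<alpha> b)" using s_invol[OF aPh] by simp
        ultimately show ?thesis by blast
      qed
    qed
  next
    show "insert \<alpha> (s \<alpha> ` N W0) \<subseteq> N w1"
    proof
      fix b assume "b \<in> insert \<alpha> (s \<alpha> ` N W0)"
      then consider "b = \<alpha>" | c where "c \<in> N W0" "b = s \<alpha> c" by auto
      then show "b \<in> N w1"
      proof cases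
        case 1 then show ?thesis using aN1 by simp
      next
        case 2
        have cP: "c \<in> Pos" using 2 N_def by auto
        have cne: "c \<noteq> \<alpha>" using 2 aN0 by auto
        have bP: "b \<in> Pos" using simple_refl[OF al(1) cP cne] 2 by simp
        have "w1 x0 \<bullet> cor b = W0 x0 \<bullet> cor c" using valne[of b] bP Pos_Phi 2 s_invol[OF aPh] by auto
        then show ?thesis using 2 bP unfolding N_def by simp
      qed
    qed
  qed
  have finN: "finite (N W0)" unfolding N_def using finPos by simp
  have notin: "\<alpha> \<notin> s \<alpha> ` N W0"
  proof
    assume "\<alpha> \<in> s \<alpha> ` N W0"
    then obtain c where c: "c \<in> N W0" "\<alpha> = s \<alpha> c" by auto
    have "c = s \<alpha> (s \<alpha> c)" using s_invol[OF aPh] by simp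
    also have "\<dots> = s \<alpha> \<alpha>" by (simp only: c(2)[symmetric])
    finally have "c = s \<alpha> \<alpha>" .
    then have "c = - \<alpha>" using s_self[OF aPh] by simp
    moreover have "c \<in> Pos" using c N_def by auto
    ultimately show False using Pos_not_neg[OF aPos] by simp
  qed
  have "card (N w1) = card (s \<alpha> ` N W0) + 1" unfolding eqN using finN notin by simp
  also have "card (s \<alpha> ` N W0) = card (N W0)" by (rule card_image[OF s_inj[OF aPh]])
  finally have "card (N w1) = card (N W0) + 1" .
  moreover have "alen Pos cor w1 = card (N w1)" unfolding N_def by (rule alen_weyl[OF w1W x0])
  moreover have "alen Pos cor W0 = card (N W0)" unfolding N_def by (rule alen_weyl[OF W0W x0])
  moreover have "alen Pos cor w1 \<le> alen Pos cor W0" using W0_max w1W by auto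
  ultimately show False by simp
qed

lemma W0_neg: assumes a: "a \<in> Pos" shows "\<exists>b\<in>Pos. \<forall>x. W0 x \<bullet> cor a = - (x \<bullet> cor b)"
proof -
  obtain x0 where x0: "x0 \<in> A0" using A0_ne by auto
  have W0W: "W0 \<in> W" using W0_max by auto
  obtain b where b: "b \<in> Phi" "\<forall>x. W0 x \<bullet> cor a = x \<bullet> cor b" using W_cor[OF W0W] a Pos_Phi by blast
  have "b \<notin> Pos"
  proof
    assume "b \<in> Pos"
    then have "W0 x0 \<bullet> cor a > 0" using b A0_mem[OF x0] by auto
    then show False using W0_anti[OF x0 a] by simp
  qed
  then have nb: "- b \<in> Pos" using Pos_or_neg[OF b(1)] by simp
  have "cor b = - cor (- b)" using cor_neg[OF neg_Phi[OF b(1)]] by simp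
  then show ?thesis using nb b by (intro bexI[of _ "- b"]) auto
qed




lemma ext_dec: "w \<in> ext_weyl Phi cor \<Longrightarrow> \<exists>v u. v \<in> charlat \<and> u \<in> W \<and> w = transl v \<circ> u"
  unfolding ext_weyl_def by auto

lemma W1_box: "w \<in> W1plus Phi cor Pos \<Longrightarrow> x \<in> A0 \<Longrightarrow> \<alpha> \<in> Sr \<Longrightarrow> 0 < w x \<bullet> cor \<alpha> \<and> w x \<bullet> cor \<alpha> < 1"
  unfolding W1plus_def by auto

lemma yform:
  assumes "u \<in> W" "v \<in> charlat" "l \<in> charlat"
  shows "W0 \<circ> transl l \<circ> (transl v \<circ> u) = transl (W0 (v + l)) \<circ> (W0 \<circ> u)"
    and "W0 (v + l) \<in> charlat" and "W0 \<circ> u \<in> W"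
proof -
  have W0W: "W0 \<in> W" using W0_max by auto
  show "W0 \<circ> transl l \<circ> (transl v \<circ> u) = transl (W0 (v + l)) \<circ> (W0 \<circ> u)"
  proof
    fix x
    have "(W0 \<circ> transl l \<circ> (transl v \<circ> u)) x = W0 (u x + (v + l))" by (simp add: transl_def algebra_simps)
    also have "\<dots> = W0 (u x) + W0 (v + l)" by (rule W_add[OF W0W])
    finally show "(W0 \<circ> transl l \<circ> (transl v \<circ> u)) x = (transl (W0 (v + l)) \<circ> (W0 \<circ> u)) x"
      by (simp add: transl_def)
  qed
  show "W0 (v + l) \<in> charlat" using W_lat[OF W0W] lat_add assms by auto
  show "W0 \<circ> u \<in> W" by (rule W_comp[OF W0W assms(1)])
qed

lemma int_of: "(x::real) \<in> \<int> \<Longrightarrow> of_int \<lfloor>x\<rfloor> = x"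
  by (metis Ints_cases floor_of_int)

lemma yneg:
  assumes w: "w \<in> W1plus Phi cor Pos" and l: "dominant Pos cor l" and a: "a \<in> Pos" and x: "x \<in> A0"
  shows "(W0 \<circ> transl l \<circ> w) x \<bullet> cor a < 0"
proof -
  obtain b where b: "b \<in> Pos" "\<forall>z. W0 z \<bullet> cor a = - (z \<bullet> cor b)" using W0_neg[OF a] by blast
  have "\<forall>\<alpha>\<in>Sr. (w x + l) \<bullet> cor \<alpha> > 0"
  proof
    fix \<alpha> assume al: "\<alpha> \<in> Sr"
    have "0 < w x \<bullet> cor \<alpha>" using W1_box[OF w x al] by simp
    moreover have "l \<bullet> cor \<alpha> \<ge> 0" using l al unfolding dominant_def by auto
    ultimately show "(w x + l) \<bullet> cor \<alpha> > 0" by (simp add: inner_add_left)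
  qed
  then have "(w x + l) \<bullet> cor b > 0" using pos_from_simple[OF b(1)] by blast
  then show ?thesis using b(2) by (simp add: transl_def)
qed

lemma main_loc:
  assumes w: "w \<in> W1plus Phi cor Pos" and w': "w' \<in> W1plus Phi cor Pos"
    and l: "l \<in> charlat" and ld: "dominant Pos cor l" and nu: "nu \<in> charlat"
    and h1: "bruhat_le Pos cor (transl nu \<circ> W0 \<circ> transl l \<circ> w) (W0 \<circ> transl l \<circ> w')"
    and h2: "bruhat_le Pos cor (transl (- nu) \<circ> W0 \<circ> transl l \<circ> w') (W0 \<circ> transl l \<circ> w)"
  shows "nu \<in> X0 Pos cor \<and> w' = transl nu \<circ> w"
proof -
  have W0W: "W0 \<in> W" using W0_max by auto
  obtain x0 where x0: "x0 \<in> A0" using A0_ne by auto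
  obtain v u where vu: "v \<in> charlat" "u \<in> W" "w = transl v \<circ> u"
    using ext_dec w unfolding W1plus_def by blast
  obtain v' u' where vu': "v' \<in> charlat" "u' \<in> W" "w' = transl v' \<circ> u'"
    using ext_dec w' unfolding W1plus_def by blast
  define y1 where "y1 = W0 \<circ> transl l \<circ> w"
  define y2 where "y2 = W0 \<circ> transl l \<circ> w'"
  have y1f: "y1 = transl (W0 (v + l)) \<circ> (W0 \<circ> u)" "W0 (v + l) \<in> charlat" "W0 \<circ> u \<in> W"
    using yform[OF vu(2) vu(1) l] unfolding y1_def vu(3) by auto
  have y2f: "y2 = transl (W0 (v' + l)) \<circ> (W0 \<circ> u')" "W0 (v' + l) \<in> charlat" "W0 \<circ> u' \<in> W"
    using yform[OF vu'(2) vu'(1) l] unfolding y2_def vu'(3) by auto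
  have "\<forall>a\<in>Pos. \<exists>m::int. \<forall>x\<in>A0. of_int m < y1 x \<bullet> cor a \<and> y1 x \<bullet> cor a < of_int m + 1"
    unfolding y1f(1) using strip[OF y1f(3) y1f(2)] by blast
  then obtain m1 where m1: "\<forall>a\<in>Pos. \<forall>x\<in>A0. of_int (m1 a) < y1 x \<bullet> cor a \<and> y1 x \<bullet> cor a < of_int (m1 a) + 1"
    by metis
  have "\<forall>a\<in>Pos. \<exists>m::int. \<forall>x\<in>A0. of_int m < y2 x \<bullet> cor a \<and> y2 x \<bullet> cor a < of_int m + 1"
    unfolding y2f(1) using strip[OF y2f(3) y2f(2)] by blast
  then obtain m2 where m2: "\<forall>a\<in>Pos. \<forall>x\<in>A0. of_int (m2 a) < y2 x \<bullet> cor a \<and> y2 x \<bullet> cor a < of_int (m2 a) + 1"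
    by metis
  have m1n: "m1 a < 0" if a: "a \<in> Pos" for a
  proof -
    have "of_int (m1 a) < y1 x0 \<bullet> cor a" using m1 a x0 by blast
    moreover have "y1 x0 \<bullet> cor a < 0" unfolding y1_def by (rule yneg[OF w ld a x0])
    ultimately show ?thesis by linarith
  qed
  have m2n: "m2 a < 0" if a: "a \<in> Pos" for a
  proof -
    have "of_int (m2 a) < y2 x0 \<bullet> cor a" using m2 a x0 by blast
    moreover have "y2 x0 \<bullet> cor a < 0" unfolding y2_def by (rule yneg[OF w' ld a x0])
    ultimately show ?thesis by linarith
  qed
  define ni where "ni a = \<lfloor>nu \<bullet> cor a\<rfloor>" for a
  have ni: "of_int (ni a) = nu \<bullet> cor a" if "a \<in> Pos" for a
    unfolding ni_def by (rule int_of) (use lat_inner nu cor_lat Pos_Phi that in auto)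
  have e1: "transl nu \<circ> W0 \<circ> transl l \<circ> w = transl nu \<circ> y1" unfolding y1_def by (simp add: comp_assoc)
  have e2: "transl (- nu) \<circ> W0 \<circ> transl l \<circ> w' = transl (- nu) \<circ> y2" unfolding y2_def by (simp add: comp_assoc)
  have L1: "int (alen Pos cor y1) = (\<Sum>a\<in>Pos. \<bar>m1 a\<bar>)" by (rule alen_strip[OF m1])
  have L2: "int (alen Pos cor y2) = (\<Sum>a\<in>Pos. \<bar>m2 a\<bar>)" by (rule alen_strip[OF m2])
  have L3: "int (alen Pos cor (transl nu \<circ> y1)) = (\<Sum>a\<in>Pos. \<bar>m1 a + ni a\<bar>)"
  proof (rule alen_strip, intro ballI)
    fix a x assume a: "a \<in> Pos" and x: "x \<in> A0"
    have "(transl nu \<circ> y1) x \<bullet> cor a = y1 x \<bullet> cor a + of_int (ni a)"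
      using ni[OF a] by (simp add: transl_def inner_add_left)
    then show "of_int (m1 a + ni a) < (transl nu \<circ> y1) x \<bullet> cor a \<and>
               (transl nu \<circ> y1) x \<bullet> cor a < of_int (m1 a + ni a) + 1"
      using m1 a x by auto
  qed
  have L4: "int (alen Pos cor (transl (- nu) \<circ> y2)) = (\<Sum>a\<in>Pos. \<bar>m2 a - ni a\<bar>)"
  proof (rule alen_strip, intro ballI)
    fix a x assume a: "a \<in> Pos" and x: "x \<in> A0"
    have "(transl (- nu) \<circ> y2) x \<bullet> cor a = y2 x \<bullet> cor a - of_int (ni a)"
      using ni[OF a] by (simp add: transl_def inner_add_left inner_diff_left)
    then show "of_int (m2 a - ni a) < (transl (- nu) \<circ> y2) x \<bullet> cor a \<and>
               (transl (- nu) \<circ> y2) x \<bullet> cor a < of_int (m2 a - ni a) + 1"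
      using m2 a x by auto
  qed
  have B1: "transl nu \<circ> y1 = y2 \<or> alen Pos cor (transl nu \<circ> y1) < alen Pos cor y2"
    using bruhat_mono[OF h1] unfolding e1 y2_def[symmetric] .
  have B2: "transl (- nu) \<circ> y2 = y1 \<or> alen Pos cor (transl (- nu) \<circ> y2) < alen Pos cor y1"
    using bruhat_mono[OF h2] unfolding e2 y1_def[symmetric] .
  have ineq: "(\<Sum>a\<in>Pos. \<bar>m1 a\<bar>) + (\<Sum>a\<in>Pos. \<bar>m2 a\<bar>) \<le> (\<Sum>a\<in>Pos. \<bar>m1 a + ni a\<bar>) + (\<Sum>a\<in>Pos. \<bar>m2 a - ni a\<bar>)"
  proof -
    have "(\<Sum>a\<in>Pos. \<bar>m1 a\<bar> + \<bar>m2 a\<bar>) \<le> (\<Sum>a\<in>Pos. \<bar>m1 a + ni a\<bar> + \<bar>m2 a - ni a\<bar>)"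
    proof (rule sum_mono)
      fix a assume a: "a \<in> Pos"
      show "\<bar>m1 a\<bar> + \<bar>m2 a\<bar> \<le> \<bar>m1 a + ni a\<bar> + \<bar>m2 a - ni a\<bar>" using m1n[OF a] m2n[OF a] by linarith
    qed
    then show ?thesis by (simp add: sum.distrib)
  qed
  have eqF: "transl nu \<circ> y1 = y2"
  proof (rule ccontr)
    assume ne: "transl nu \<circ> y1 \<noteq> y2"
    then have "alen Pos cor (transl nu \<circ> y1) < alen Pos cor y2" using B1 by simp
    moreover have "alen Pos cor (transl (- nu) \<circ> y2) \<le> alen Pos cor y1" using B2 by auto
    ultimately show False using ineq L1 L2 L3 L4 by linarith
  qed
  have fx: "W0 (w' x - w x) = nu" for x
  proof -
    have "(transl nu \<circ> y1) x = y2 x" using eqF by simp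
    then have "W0 (w x + l) + nu = W0 (w' x + l)" by (simp add: y1_def y2_def transl_def)
    moreover have "W0 (w' x + l) - W0 (w x + l) = W0 (w' x - w x)"
      using W_diff[OF W0W, of "w' x + l" "w x + l"] by simp
    ultimately show ?thesis by (simp add: algebra_simps)
  qed
  define mu where "mu = v' - v"
  have w00: "w' 0 - w 0 = mu" unfolding mu_def vu(3) vu'(3) using W_zero[OF vu(2)] W_zero[OF vu'(2)] by (simp add: transl_def)
  have dx: "w' x - w x = mu" for x
    using W_inj[OF W0W] fx[of x] fx[of 0] w00 unfolding inj_def by metis
  have muL: "mu \<in> charlat" unfolding mu_def using lat_diff vu(1) vu'(1) by auto
  have mus: "mu \<bullet> cor \<alpha> = 0" if al: "\<alpha> \<in> Sr" for \<alpha>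
  proof -
    have "mu \<bullet> cor \<alpha> = w' x0 \<bullet> cor \<alpha> - w x0 \<bullet> cor \<alpha>" using dx[of x0] by (metis inner_diff_left)
    then have b: "-1 < mu \<bullet> cor \<alpha>" "mu \<bullet> cor \<alpha> < 1" using W1_box[OF w x0 al] W1_box[OF w' x0 al] by auto
    have "mu \<bullet> cor \<alpha> \<in> \<int>" using lat_inner muL cor_lat Sr_Phi al by auto
    then obtain k where k: "mu \<bullet> cor \<alpha> = of_int k" using Ints_cases by blast
    then have "k = 0" using b by simp
    then show ?thesis using k by simp
  qed
  have muall: "\<forall>a\<in>Phi. mu \<bullet> cor a = 0"
  proof
    fix a assume a: "a \<in> Phi"
    show "mu \<bullet> cor a = 0"
    proof (cases "a \<in> Pos")
      case True then show ?thesis using zero_from_simple mus by blast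
    next
      case False
      then have na: "- a \<in> Pos" using Pos_or_neg[OF a] by simp
      have "cor a = - cor (- a)" using cor_neg[OF neg_Phi[OF a]] by simp
      then show ?thesis using zero_from_simple[OF na] mus by simp
    qed
  qed
  have "W0 mu = mu" by (rule W_fix[OF W0W muall])
  then have numu: "nu = mu" using fx[of 0] dx[of 0] by simp
  have "nu \<in> X0 Pos cor" unfolding X0_def using nu mus numu by simp
  moreover have "w' = transl nu \<circ> w"
  proof
    fix x show "w' x = (transl nu \<circ> w) x" using dx[of x] numu by (simp add: transl_def algebra_simps)
  qed
  ultimately show ?thesis by simp
qed

end

theorem mainTheorem4:
  fixes Phi Pos :: "(real^'n) set" and cor :: "real^'n \<Rightarrow> real^'n"
    and w w' :: "real^'n \<Rightarrow> real^'n" and l nu :: "real^'n"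
  assumes "root_datum Phi cor" and "positive_system Phi Pos"
    and "w \<in> W1plus Phi cor Pos" and "w' \<in> W1plus Phi cor Pos"
    and "l \<in> charlat" and "dominant Pos cor l" and "nu \<in> charlat"
    and "bruhat_le Pos cor (transl nu \<circ> w0 Phi cor Pos \<circ> transl l \<circ> w)
                           (w0 Phi cor Pos \<circ> transl l \<circ> w')"
    and "bruhat_le Pos cor (transl (- nu) \<circ> w0 Phi cor Pos \<circ> transl l \<circ> w')
                           (w0 Phi cor Pos \<circ> transl l \<circ> w)"
  shows "nu \<in> X0 Pos cor \<and> w' = transl nu \<circ> w"
proof -
  obtain f where f: "\<forall>a\<in>Phi. f \<bullet> a \<noteq> 0" "Pos = {a\<in>Phi. f \<bullet> a > 0}"
    using assms(2) unfolding positive_system_def by blast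
  interpret rdat Phi Pos cor f using assms(1) f by unfold_locales auto
  show ?thesis using main_loc[OF assms(3-7)] assms(8,9) unfolding W0_def by blast
qed

end
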